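(* Let $(c_1,\dots,c_m)\in\mathbb{Z}^m$ be a quiddity cycle with $m>3$. Then there are indices $j,k\in\{1,\dots,m\}$ such that: - $|j-k|>1$ and $\{j,k\}\ne\{1,m\}$, i.e. $j,k$ are not cyclically adjacent; - $|c_j|<2$ and $|c_k|<2$.
   Context: $\eta(c)=\begin{pmatrix}c&-1\\1&0\end{pmatrix}$. A quiddity cycle is $(c_1,\dots,c_m)$ with $\eta(c_1)\cdots\eta(c_m)=-I$. *)

theory Defs
  imports "HOL-Analysis.Analysis"
begin

definition eta :: "int \<Rightarrow> int^2^2" where
  "eta c = vector [vector [c, -1], vector [1, 0]]"

definition eta_prod :: "int list \<Rightarrow> int^2^2" where
  "eta_prod cs = foldr (\<lambda>c M. eta c ** M) cs (mat 1)"

definition quiddity_cycle :: "int list \<Rightarrow> bool" where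
  "quiddity_cycle cs \<longleftrightarrow> eta_prod cs = - mat 1"

end

theory Submission
  imports Defs
begin

lemma eta_prod_Nil: "eta_prod [] = mat 1" by (simp add: eta_prod_def)
lemma eta_prod_Cons: "eta_prod (x#xs) = eta x ** eta_prod xs" by (simp add: eta_prod_def)

lemma eta_prod_append: "eta_prod (xs @ ys) = eta_prod xs ** eta_prod ys"
  by (induction xs) (simp_all add: eta_prod_Nil eta_prod_Cons matrix_mul_assoc)

definition etainv :: "int \<Rightarrow> int^2^2" where
  "etainv c = vector [vector [0, 1], vector [-1, c]]"

lemma etainv_eta: "etainv c ** eta c = mat 1"
  unfolding etainv_def eta_def
  by (simp add: matrix_matrix_mult_def vec_eq_iff forall_2 sum_2 mat_def)

lemma eta_etainv: "eta c ** etainv c = mat 1"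
  unfolding etainv_def eta_def
  by (simp add: matrix_matrix_mult_def vec_eq_iff forall_2 sum_2 mat_def)

lemma neg_mul_left: "(- A) ** (B::int^2^2) = - (A ** B)"
  by (simp add: matrix_matrix_mult_def vec_eq_iff sum_negf)

lemma neg_mul_right: "A ** (- B::int^2^2) = - (A ** B)"
  by (simp add: matrix_matrix_mult_def vec_eq_iff sum_negf)

lemma quid_rotate1:
  assumes "quiddity_cycle c" shows "quiddity_cycle (rotate1 c)"
proof (cases c)
  case Nil then show ?thesis using assms by simp
next
  case (Cons x xs)
  have h: "eta x ** eta_prod xs = - mat 1"
    using assms Cons by (simp add: quiddity_cycle_def eta_prod_Cons)
  have "etainv x ** (eta x ** eta_prod xs) = etainv x ** (- mat 1)" using h by simp
  hence p: "eta_prod xs = - etainv x"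
    by (simp add: matrix_mul_assoc etainv_eta neg_mul_right)
  have "eta_prod (xs @ [x]) = - mat 1"
    by (simp add: eta_prod_append p eta_prod_Cons eta_prod_Nil neg_mul_left etainv_eta)
  then show ?thesis using Cons by (simp add: quiddity_cycle_def)
qed

lemma quid_rotate: "quiddity_cycle c \<Longrightarrow> quiddity_cycle (rotate n c)"
  by (induction n) (simp_all add: quid_rotate1)

lemma eta_mul_11: "(eta c ** Q) $ 1 $ 1 = c * Q$1$1 - Q$2$1"
  unfolding eta_def by (simp add: matrix_matrix_mult_def sum_2)
lemma eta_mul_21: "(eta c ** Q) $ 2 $ 1 = Q$1$1"
  unfolding eta_def by (simp add: matrix_matrix_mult_def sum_2)

lemma growth:
  assumes "\<forall>x\<in>set cs. \<bar>x\<bar> \<ge> 2"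
  shows "\<bar>eta_prod cs $1$1\<bar> > \<bar>eta_prod cs $2$1\<bar> \<and> \<bar>eta_prod cs $1$1\<bar> \<ge> 1
         \<and> (cs \<noteq> [] \<longrightarrow> \<bar>eta_prod cs $1$1\<bar> \<ge> 2)"
  using assms
proof (induction cs)
  case Nil then show ?case by (simp add: eta_prod_Nil mat_def)
next
  case (Cons x xs)
  define p where "p = eta_prod xs $1$1"
  define q where "q = eta_prod xs $2$1"
  have ih: "\<bar>p\<bar> > \<bar>q\<bar>" "\<bar>p\<bar> \<ge> 1" using Cons unfolding p_def q_def by auto
  have x: "\<bar>x\<bar> \<ge> 2" using Cons.prems by simp
  have "\<bar>x * p\<bar> \<ge> 2 * \<bar>p\<bar>" using x by (simp add: abs_mult mult_right_mono)
  hence "\<bar>x * p - q\<bar> \<ge> \<bar>p\<bar> + 1" using ih by linarith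
  then show ?case
    by (simp add: eta_prod_Cons eta_mul_11 eta_mul_21 flip: p_def q_def) (use ih in linarith)
qed

lemma two_tail:
  assumes "eta_prod (xs @ [y, z]) = - mat 1"
  shows "eta_prod xs $1$1 = 1"
proof -
  define P where "P = eta_prod xs"
  have "P ** (eta y ** (eta z ** mat 1)) = - mat 1"
    using assms by (simp add: eta_prod_append eta_prod_Cons eta_prod_Nil P_def)
  hence e: "P ** (eta y ** eta z) = - mat 1" by simp
  have a: "(P ** (eta y ** eta z)) $1$1 = -1" using e by (simp add: mat_def)
  have b: "(P ** (eta y ** eta z)) $1$2 = 0" using e by (simp add: mat_def)
  have a': "P$1$1 * (y*z - 1) + P$1$2 * z = -1"
    using a unfolding eta_def by (simp add: matrix_matrix_mult_def sum_2)
  have b': "- P$1$1 * y - P$1$2 = 0"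
    using b unfolding eta_def by (simp add: matrix_matrix_mult_def sum_2)
  have "P$1$2 = - P$1$1 * y" using b' by simp
  with a' have "P$1$1 * (y*z - 1) - P$1$1 * y * z = -1" by simp
  hence "P$1$1 = 1" by (simp add: algebra_simps)
  thus ?thesis by (simp add: P_def)
qed

lemma small_exists:
  assumes "quiddity_cycle c" "length c \<ge> 3"
  shows "\<exists>i < length c - 2. \<bar>c ! i\<bar> < 2"
proof (rule ccontr)
  assume na: "\<not> ?thesis"
  define xs where "xs = take (length c - 2) c"
  have "length (drop (length c - 2) c) = 2" using assms(2) by simp
  then obtain y z where yz: "drop (length c - 2) c = [y, z]"
    by (metis (no_types, lifting) length_0_conv length_Suc_conv numeral_2_eq_2)
  have split: "c = xs @ [y, z]" unfolding xs_def by (metis append_take_drop_id yz)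
  have "eta_prod xs $1$1 = 1"
    using assms(1) split two_tail unfolding quiddity_cycle_def by metis
  moreover have "\<forall>x\<in>set xs. \<bar>x\<bar> \<ge> 2"
  proof
    fix x assume "x \<in> set xs"
    then obtain i where i: "i < length xs" "x = xs ! i" by (auto simp: in_set_conv_nth)
    have "i < length c - 2" using i(1) unfolding xs_def by simp
    hence "\<not> \<bar>c ! i\<bar> < 2" using na by blast
    moreover have "xs ! i = c ! i" using i(1) unfolding xs_def by simp
    ultimately show "\<bar>x\<bar> \<ge> 2" using i(2) by simp
  qed
  moreover have "xs \<noteq> []" using assms(2) unfolding xs_def by (cases c) auto
  ultimately show False using growth by fastforce
qed

lemma small_rot:
  assumes "quiddity_cycle c" "length c \<ge> 3"
  shows "\<exists>t < length c - 2. \<bar>c ! ((r + t) mod length c)\<bar> < 2"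
proof -
  obtain t where t: "t < length c - 2" "\<bar>rotate r c ! t\<bar> < 2"
    using small_exists[OF quid_rotate[OF assms(1)]] assms(2) by auto
  have "rotate r c ! t = c ! ((r + t) mod length c)"
    using t(1) by (simp add: nth_rotate add.commute)
  thus ?thesis using t by auto
qed

lemma nonadj:
  assumes "a < m" "2 \<le> d" "d + 2 \<le> m"
  shows "\<bar>int a - int ((a + d) mod m)\<bar> > 1 \<and> {a+1, (a + d) mod m + 1} \<noteq> {1, m}"
proof (cases "a + d < m")
  case True
  then show ?thesis using assms by (auto simp: doubleton_eq_iff)
next
  case False
  have "(a + d) mod m = a + d - m"
    using False assms by (simp add: le_mod_geq)
  then show ?thesis using assms False by (auto simp: doubleton_eq_iff)
qed

theorem corollary6p3:
  fixes c :: "int list"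
  assumes "quiddity_cycle c" and "length c > 3"
  shows "\<exists>j k. j \<in> {1..length c} \<and> k \<in> {1..length c} \<and>
           \<bar>int j - int k\<bar> > 1 \<and> {j, k} \<noteq> {1, length c} \<and>
           \<bar>c ! (j - 1)\<bar> < 2 \<and> \<bar>c ! (k - 1)\<bar> < 2"
proof -
  define m where "m = length c"
  have m: "m \<ge> 4" "length c \<ge> 3" using assms(2) m_def by auto
  have pair: "\<exists>j k. j \<in> {1..m} \<and> k \<in> {1..m} \<and>
           \<bar>int j - int k\<bar> > 1 \<and> {j, k} \<noteq> {1, m} \<and>
           \<bar>c ! (j - 1)\<bar> < 2 \<and> \<bar>c ! (k - 1)\<bar> < 2"
    if "a < m" "2 \<le> d" "d + 2 \<le> m" "\<bar>c ! a\<bar> < 2" "\<bar>c ! ((a + d) mod m)\<bar> < 2" for a d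
  proof -
    have lt: "(a + d) mod m < m" using that by simp
    have n: "\<bar>int (a+1) - int ((a + d) mod m + 1)\<bar> > 1" "{a+1, (a + d) mod m + 1} \<noteq> {1, m}"
      using nonadj[OF that(1-3)] by simp_all
    have c: "\<bar>c ! (a + 1 - 1)\<bar> < 2" "\<bar>c ! ((a + d) mod m + 1 - 1)\<bar> < 2" using that(4,5) by simp_all
    have r: "a+1 \<in> {1..m}" "(a + d) mod m + 1 \<in> {1..m}" using lt that(1) by (auto simp del: mod_less_divisor)
    show ?thesis using n c r by blast
  qed
  obtain i0 where i0: "i0 < m - 2" "\<bar>c ! i0\<bar> < 2"
    using small_rot[OF assms(1) m(2), of 0] m_def by auto
  obtain t1 where t1: "t1 < m - 2" "\<bar>c ! ((i0 + 1 + t1) mod m)\<bar> < 2"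
    using small_rot[OF assms(1) m(2), of "i0+1"] m_def by auto
  show ?thesis
  proof (cases "t1 \<ge> 1")
    case True
    have "\<bar>c ! ((i0 + (1 + t1)) mod m)\<bar> < 2" using t1(2) by (simp add: add.assoc)
    then show ?thesis
      by (intro pair[of i0 "1 + t1", unfolded m_def]) (use i0 t1 m True in \<open>simp_all add: m_def\<close>)
  next
    case False
    hence "t1 = 0" by simp
    hence s1: "\<bar>c ! ((i0 + 1) mod m)\<bar> < 2" using t1 by simp
    obtain t2 where t2: "t2 < m - 2" "\<bar>c ! ((i0 + 2 + t2) mod m)\<bar> < 2"
      using small_rot[OF assms(1) m(2), of "i0+2"] m_def by auto
    show ?thesis
    proof (cases "t2 + 4 \<le> m")
      case True
      have "\<bar>c ! ((i0 + (2 + t2)) mod m)\<bar> < 2" using t2(2) by (simp add: add.assoc)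
      then show ?thesis
        by (intro pair[of i0 "2 + t2", unfolded m_def]) (use i0 t2 m True in \<open>simp_all add: m_def\<close>)
    next
      case False
      hence "t2 = m - 3" using t2 by simp
      hence "i0 + 2 + t2 = (i0 + 1) + (m - 2)" using m by simp
      hence e: "(i0 + 2 + t2) mod m = ((i0 + 1) mod m + (m - 2)) mod m"
        by (metis mod_add_left_eq)
      have "(i0 + 1) mod m < m" using m by simp
      moreover have "\<bar>c ! (((i0 + 1) mod m + (m - 2)) mod m)\<bar> < 2" using t2(2) e by simp
      ultimately show ?thesis
        by (intro pair[of "(i0 + 1) mod m" "m - 2", unfolded m_def]) (use s1 m in \<open>simp_all add: m_def\<close>)
    qed
  qed
qed

end
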